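(* Let $S$ be a stacked $2$-sphere and let $\alpha=abc$ and $\beta=abd$ be two triangles of $S$, with $\overline{\alpha}$ (resp. $\overline{\beta}$) the unique tetrahedron of $\overline{S}$ containing $\alpha$ (resp. $\beta$). (a) If $\overline{\alpha}$ and $\overline{\beta}$ are adjacent nodes of the dual graph $\Lambda(\overline{S})$, then $cd$ is not an edge of $S$ and the triangulated $2$-sphere $T$ obtained from $S$ by the edge flip $ab\mapsto cd$ is stacked. (b) Conversely, if $cd$ is not an edge of $S$ and the $2$-sphere $T$ obtained by the edge flip $ab\mapsto cd$ is stacked, then $\overline{\alpha}$ and $\overline{\beta}$ are adjacent in $\Lambda(\overline{S})$.
   Context: A triangulated $2$-sphere is a finite simplicial complex whose geometric realization is homeomorphic to the $2$-sphere. Edge flip $ab\mapsto cd$: if $abc,abd$ are triangles and $cd$ is not an edge, replace $abc,abd$ by $acd,bcd$. A stacked $3$-ball is a simplicial complex obtained from a single tetrahedron (with its faces) by repeatedly gluing a new tetrahedron along exactly one triangle of the boundary, introducing one new vertex each time. A stacked $2$-sphere is a triangulated $2$-sphere isomorphic to the boundary of a stacked $3$-ball. For a stacked $2$-sphere $S$, $\overline{S}$ denotes the simplicial complex whose faces are all cliques of the edge graph of $S$; it is known that $\overline{S}$ is a stacked $3$-ball with boundary $S$, and that it is, up to isomorphism, the unique stacked $3$-ball with boundary $S$. Each triangle $\alpha$ of $S$ lies in a unique tetrahedron $\overline{\alpha}$ of $\overline{S}$. The dual graph $\Lambda(C)$ of a complex $C$ made of tetrahedra has the tetrahedra as nodes,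 two nodes being adjacent iff the tetrahedra share a triangle; for a stacked $3$-ball it is a tree with node degrees at most $4$. *)

theory Defs
  imports Main
begin

text \<open>Pure 3-dimensional complexes are represented by their set of tetrahedra
(4-element vertex sets); 2-dimensional complexes (2-spheres) by their set of
triangles (3-element vertex sets). Lower faces are implicit (all subsets).\<close>

definition boundary_tris :: "'a set set \<Rightarrow> 'a set set" where
  "boundary_tris B = {t. card t = 3 \<and> card {s \<in> B. t \<subseteq> s} = 1}"

inductive stacked_ball :: "'a set set \<Rightarrow> bool" where
  single: "card s = 4 \<Longrightarrow> stacked_ball {s}"
| glue: "stacked_ball B \<Longrightarrow> t \<in> boundary_tris B \<Longrightarrow> v \<notin> \<Union>B
         \<Longrightarrow> stacked_ball (insert (insert v t) B)"

definition stacked_sphere :: "'a set set \<Rightarrow> bool" where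
  "stacked_sphere S \<longleftrightarrow> (\<exists>(B :: 'a set set) (f :: 'a \<Rightarrow> 'a). stacked_ball B \<and> inj_on f (\<Union>B)
       \<and> (\<lambda>t. f ` t) ` boundary_tris B = S)"

definition edges2 :: "'a set set \<Rightarrow> 'a set set" where
  "edges2 S = {e. card e = 2 \<and> (\<exists>t\<in>S. e \<subseteq> t)}"

definition clique_tets :: "'a set set \<Rightarrow> 'a set set" where
  "clique_tets S = {s. card s = 4 \<and> (\<forall>x\<in>s. \<forall>y\<in>s. x \<noteq> y \<longrightarrow> {x, y} \<in> edges2 S)}"

definition tet_of :: "'a set set \<Rightarrow> 'a set \<Rightarrow> 'a set" where
  "tet_of S t = (THE s. s \<in> clique_tets S \<and> t \<subseteq> s)"

definition dual_adj :: "'a set set \<Rightarrow> 'a set \<Rightarrow> 'a set \<Rightarrow> bool" where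
  "dual_adj C s s' \<longleftrightarrow> s \<in> C \<and> s' \<in> C \<and> s \<noteq> s' \<and> card (s \<inter> s') = 3"

definition edge_flip :: "'a set set \<Rightarrow> 'a \<Rightarrow> 'a \<Rightarrow> 'a \<Rightarrow> 'a \<Rightarrow> 'a set set" where
  "edge_flip S a b c d = (S - {{a, b, c}, {a, b, d}}) \<union> {{a, c, d}, {b, c, d}}"

end

theory Submission
  imports Defs
begin


definition cnt :: "'a set set \<Rightarrow> 'a set \<Rightarrow> nat" where
  "cnt B u = card {s\<in>B. u \<subseteq> s}"

lemma bd_iff: "u \<in> boundary_tris B \<longleftrightarrow> card u = 3 \<and> cnt B u = 1"
  by (simp add: boundary_tris_def cnt_def)

lemma cnt_insert: "finite B \<Longrightarrow> N \<notin> B \<Longrightarrow> cnt (insert N B) u = cnt B u + (if u \<subseteq> N then 1 else 0)"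
proof -
  assume f: "finite B" and n: "N \<notin> B"
  show ?thesis
  proof (cases "u \<subseteq> N")
    case True
    then have "{s\<in>insert N B. u \<subseteq> s} = insert N {s\<in>B. u \<subseteq> s}" by auto
    then show ?thesis using f n True by (simp add: cnt_def)
  next
    case False
    then have "{s\<in>insert N B. u \<subseteq> s} = {s\<in>B. u \<subseteq> s}" by auto
    then show ?thesis using False by (simp add: cnt_def)
  qed
qed

lemma cnt_zero: "finite B \<Longrightarrow> (\<forall>s\<in>B. \<not> u \<subseteq> s) \<Longrightarrow> cnt B u = 0"
  by (simp add: cnt_def)

lemma cnt_pos: "finite B \<Longrightarrow> s \<in> B \<Longrightarrow> u \<subseteq> s \<Longrightarrow> cnt B u \<ge> 1"
  unfolding cnt_def by (metis (mono_tags, lifting) One_nat_def Suc_leI card_gt_0_iff empty_iff finite_subset mem_Collect_eq subsetI)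

lemma cnt_two: "finite B \<Longrightarrow> s1 \<in> B \<Longrightarrow> s2 \<in> B \<Longrightarrow> s1 \<noteq> s2 \<Longrightarrow> u \<subseteq> s1 \<Longrightarrow> u \<subseteq> s2 \<Longrightarrow> cnt B u \<ge> 2"
proof -
  assume a: "finite B" "s1 \<in> B" "s2 \<in> B" "s1 \<noteq> s2" "u \<subseteq> s1" "u \<subseteq> s2"
  have "{s1,s2} \<subseteq> {s\<in>B. u \<subseteq> s}" using a by auto
  then have "card {s1,s2} \<le> card {s\<in>B. u \<subseteq> s}" using a(1) by (intro card_mono) auto
  then show ?thesis using a(4) by (simp add: cnt_def)
qed

lemma bd_ex: "u \<in> boundary_tris B \<Longrightarrow> \<exists>s\<in>B. u \<subseteq> s"
  unfolding boundary_tris_def by (metis (mono_tags, lifting) One_nat_def card.empty empty_Collect_eq mem_Collect_eq zero_neq_one)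

lemma bd_unique: "u \<in> boundary_tris B \<Longrightarrow> s1 \<in> B \<Longrightarrow> s2 \<in> B \<Longrightarrow> u \<subseteq> s1 \<Longrightarrow> u \<subseteq> s2 \<Longrightarrow> s1 = s2"
proof -
  assume a: "u \<in> boundary_tris B" "s1 \<in> B" "s2 \<in> B" "u \<subseteq> s1" "u \<subseteq> s2"
  then obtain x where x: "{s\<in>B. u \<subseteq> s} = {x}" unfolding boundary_tris_def by (auto simp: card_1_singleton_iff)
  have "s1 \<in> {s\<in>B. u \<subseteq> s}" "s2 \<in> {s\<in>B. u \<subseteq> s}" using a by auto
  then show ?thesis using x by auto
qed

lemma bd_mono: "u \<in> boundary_tris B \<Longrightarrow> B1 \<subseteq> B \<Longrightarrow> s \<in> B1 \<Longrightarrow> u \<subseteq> s \<Longrightarrow> u \<in> boundary_tris B1"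
proof -
  assume a: "u \<in> boundary_tris B" "B1 \<subseteq> B" "s \<in> B1" "u \<subseteq> s"
  have "{s'\<in>B1. u \<subseteq> s'} = {s}" using bd_unique[OF a(1)] a by auto
  then show ?thesis using a(1) by (simp add: boundary_tris_def)
qed

lemma bd_card: "u \<in> boundary_tris B \<Longrightarrow> card u = 3"
  by (simp add: boundary_tris_def)

lemma stacked_finite: "stacked_ball B \<Longrightarrow> finite B"
  by (induction rule: stacked_ball.induct) auto

lemma stacked_card: "stacked_ball B \<Longrightarrow> s \<in> B \<Longrightarrow> card s = 4"
proof (induction arbitrary: s rule: stacked_ball.induct)
  case (single s) then show ?case by simp
next
  case (glue B t v)
  have "card t = 3" using glue(2) by (simp add: boundary_tris_def)
  moreover have "v \<notin> t" using bd_ex[OF glue(2)] glue(3) by auto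
  moreover have "finite t" using \<open>card t = 3\<close> by (intro card_ge_0_finite) simp
  ultimately show ?case using glue by auto
qed

lemma stacked_fin_tet: "stacked_ball B \<Longrightarrow> s \<in> B \<Longrightarrow> finite s"
  by (intro card_ge_0_finite) (simp add: stacked_card)

lemma glue_facts: "t \<in> boundary_tris B \<Longrightarrow> v \<notin> \<Union>B \<Longrightarrow> card t = 3 \<and> finite t \<and> v \<notin> t \<and> insert v t \<notin> B"
proof -
  assume a: "t \<in> boundary_tris B" "v \<notin> \<Union>B"
  have c: "card t = 3" using a by (simp add: boundary_tris_def)
  then have "finite t" by (intro card_ge_0_finite) simp
  then show ?thesis using bd_ex[OF a(1)] a c by auto
qed

lemma card3_sub_eq: "card u = 3 \<Longrightarrow> card t = 3 \<Longrightarrow> u \<subseteq> t \<Longrightarrow> u = t"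
  by (metis card_subset_eq card_ge_0_finite zero_less_numeral)

lemma bd_glue:
  assumes "finite B" "t \<in> boundary_tris B" "v \<notin> \<Union>B"
  shows "u \<in> boundary_tris (insert (insert v t) B) \<longleftrightarrow>
    (u \<in> boundary_tris B \<and> u \<noteq> t) \<or> (card u = 3 \<and> v \<in> u \<and> u \<subseteq> insert v t)"
proof -
  note gf = glue_facts[OF assms(2,3)]
  have c: "cnt (insert (insert v t) B) u = cnt B u + (if u \<subseteq> insert v t then 1 else 0)"
    using cnt_insert[OF assms(1)] gf by blast
  show ?thesis
  proof (cases "v \<in> u")
    case True
    then have "cnt B u = 0" using assms(1,3) by (intro cnt_zero) auto
    then show ?thesis using c True by (auto simp: bd_iff)
  next
    case False
    show ?thesis
    proof (cases "card u = 3 \<and> u \<subseteq> insert v t")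
      case True
      then have "u = t" using False gf card3_sub_eq by blast
      then show ?thesis using c assms(2) gf by (auto simp: bd_iff)
    next
      case F2: False
      then show ?thesis using c False by (auto simp: bd_iff)
    qed
  qed
qed

lemma stacked_union_fresh: "v \<notin> \<Union>B \<Longrightarrow> s \<in> B \<Longrightarrow> v \<notin> s" by auto

lemma I3: "stacked_ball B \<Longrightarrow> card u = 3 \<Longrightarrow> cnt B u \<le> 2"
proof (induction arbitrary: u rule: stacked_ball.induct)
  case (single s)
  have "{sa\<in>{s}. u \<subseteq> sa} \<subseteq> {s}" by auto
  then have "card {sa\<in>{s}. u \<subseteq> sa} \<le> 1" using card_mono[of "{s}"] by fastforce
  then show ?case by (simp add: cnt_def)
next
  case (glue B t v)
  note gf = glue_facts[OF glue(2,3)]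
  have fB: "finite B" using stacked_finite[OF glue(1)] .
  have c: "cnt (insert (insert v t) B) u = cnt B u + (if u \<subseteq> insert v t then 1 else 0)"
    using cnt_insert[OF fB] gf by blast
  show ?case
  proof (cases "u \<subseteq> insert v t")
    case True
    show ?thesis
    proof (cases "v \<in> u")
      case True
      then have "cnt B u = 0" using fB glue(3) by (intro cnt_zero) auto
      then show ?thesis using c by simp
    next
      case False
      then have "u = t" using True gf glue(5) card3_sub_eq by blast
      then show ?thesis using c glue(2) by (simp add: bd_iff)
    qed
  next
    case False
    then show ?thesis using c glue by simp
  qed
qed

lemma extend_edge: "card e = 2 \<Longrightarrow> e \<subseteq> s \<Longrightarrow> finite s \<Longrightarrow> card s \<ge> 3 \<Longrightarrow> \<exists>z\<in>s. z \<notin> e \<and> card (insert z e) = 3"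
proof -
  assume a: "card e = 2" "e \<subseteq> s" "finite s" "card s \<ge> 3"
  have "e \<noteq> s" using a by auto
  then obtain z where "z \<in> s" "z \<notin> e" using a(2) by blast
  moreover have "finite e" using a(2,3) finite_subset by blast
  ultimately show ?thesis using a(1) by auto
qed

lemma I4: "stacked_ball B \<Longrightarrow> s \<in> B \<Longrightarrow> e \<subseteq> s \<Longrightarrow> card e = 2 \<Longrightarrow> \<exists>u\<in>boundary_tris B. e \<subseteq> u"
proof (induction arbitrary: s e rule: stacked_ball.induct)
  case (single s0)
  then have "s = s0" by simp
  have "finite s0" using single(1) by (intro card_ge_0_finite) simp
  then obtain z where z: "z \<in> s0" "z \<notin> e" "card (insert z e) = 3"
    using extend_edge[of e s0] single \<open>s = s0\<close> by auto
  have "insert z e \<subseteq> s0" using z single \<open>s = s0\<close> by auto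
  then have "{s'\<in>{s0}. insert z e \<subseteq> s'} = {s0}" by auto
  then have "insert z e \<in> boundary_tris {s0}" using z by (simp add: bd_iff cnt_def)
  then show ?case by auto
next
  case (glue B t v)
  note gf = glue_facts[OF glue(2,3)]
  have fB: "finite B" using stacked_finite[OF glue(1)] .
  note bg = bd_glue[OF fB glue(2,3)]
  show ?case
  proof (cases "s \<in> B")
    case True
    then obtain u where u: "u \<in> boundary_tris B" "e \<subseteq> u" using glue by blast
    show ?thesis
    proof (cases "u = t")
      case False
      then show ?thesis using u bg by blast
    next
      case True
      have "v \<notin> e" using u True gf by auto
      moreover have "finite e" using u(2) True gf finite_subset by blast
      ultimately have "card (insert v e) = 3" using glue.prems(3) by simp
      then have "insert v e \<in> boundary_tris (insert (insert v t) B)"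
        using bg u True by auto
      then show ?thesis by blast
    qed
  next
    case False
    then have sN: "s = insert v t" using glue.prems(1) by simp
    have "finite (insert v t)" "card (insert v t) \<ge> 3" using gf by auto
    then obtain z where z: "z \<in> insert v t" "z \<notin> e" "card (insert z e) = 3"
      using extend_edge[of e "insert v t"] glue.prems(2,3) sN by auto
    show ?thesis
    proof (cases "v \<in> e")
      case True
      then have "insert z e \<in> boundary_tris (insert (insert v t) B)"
        using bg z glue.prems(2) sN by auto
      then show ?thesis by blast
    next
      case False
      have "finite e" using glue.prems(2) sN gf finite_subset by blast
      then have "card (insert v e) = 3" using glue.prems(3) False by simp
      then have "insert v e \<in> boundary_tris (insert (insert v t) B)"
        using bg glue.prems(2) sN by auto
      then show ?thesis by blast
    qed
  qed
qed

lemma I5: "stacked_ball B \<Longrightarrow> card K = 4 \<Longrightarrow> (\<forall>x\<in>K. \<forall>y\<in>K. x \<noteq> y \<longrightarrow> (\<exists>s\<in>B. {x,y} \<subseteq> s)) \<Longrightarrow> K \<in> B"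
proof (induction arbitrary: K rule: stacked_ball.induct)
  case (single s)
  have "K \<subseteq> s"
  proof
    fix x assume x: "x \<in> K"
    have "card (K - {x}) = 3" using single(2) x by simp
    then have "K - {x} \<noteq> {}" by (metis card.empty zero_neq_numeral)
    then obtain y where "y \<in> K" "y \<noteq> x" by blast
    then show "x \<in> s" using single(3) x by auto
  qed
  moreover have "finite s" using single(1) by (intro card_ge_0_finite) simp
  ultimately have "K = s" using single by (metis card_subset_eq)
  then show ?case by simp
next
  case (glue B t v)
  note gf = glue_facts[OF glue(2,3)]
  show ?case
  proof (cases "v \<in> K")
    case True
    have "K \<subseteq> insert v t"
    proof
      fix y assume y: "y \<in> K"
      show "y \<in> insert v t"
      proof (cases "y = v")
        case False
        then obtain s where "s \<in> insert (insert v t) B" "{v,y} \<subseteq> s" using glue.prems(2)[rule_format, OF True y] by metis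
        then show ?thesis using glue(3) by auto
      qed simp
    qed
    moreover have "card (insert v t) = 4" "finite (insert v t)" using gf by auto
    ultimately have "K = insert v t" using glue(5) by (metis card_subset_eq)
    then show ?thesis by simp
  next
    case False
    obtain s0 where s0: "s0 \<in> B" "t \<subseteq> s0" using bd_ex[OF glue(2)] by blast
    have "\<forall>x\<in>K. \<forall>y\<in>K. x \<noteq> y \<longrightarrow> (\<exists>s\<in>B. {x,y} \<subseteq> s)"
    proof (intro ballI impI)
      fix x y assume xy: "x \<in> K" "y \<in> K" "x \<noteq> y"
      then obtain s where s: "s \<in> insert (insert v t) B" "{x,y} \<subseteq> s" using glue(6) by blast
      show "\<exists>s\<in>B. {x,y} \<subseteq> s"
      proof (cases "s \<in> B")
        case False
        then have "{x,y} \<subseteq> t" using s xy False \<open>v \<notin> K\<close> by auto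
        then show ?thesis using s0 by blast
      qed (use s in blast)
    qed
    then show ?thesis using glue by blast
  qed
qed

lemma I6: "stacked_ball B \<Longrightarrow> p \<noteq> r \<Longrightarrow> q \<noteq> w \<Longrightarrow>
   (\<exists>s\<in>B. {p,q} \<subseteq> s) \<Longrightarrow> (\<exists>s\<in>B. {q,r} \<subseteq> s) \<Longrightarrow> (\<exists>s\<in>B. {r,w} \<subseteq> s) \<Longrightarrow> (\<exists>s\<in>B. {w,p} \<subseteq> s)
   \<Longrightarrow> \<not> (\<exists>s\<in>B. {p,r} \<subseteq> s) \<Longrightarrow> (\<exists>s\<in>B. {q,w} \<subseteq> s)"
proof (induction arbitrary: p q r w rule: stacked_ball.induct)
  case (single s)
  then show ?case by auto
next
  case (glue B t v)
  note gf = glue_facts[OF glue(2,3)]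
  obtain s0 where s0: "s0 \<in> B" "t \<subseteq> s0" using bd_ex[OF glue(2)] by blast
  let ?N = "insert v t"
  have ed: "\<And>x y. (\<exists>s\<in>insert ?N B. {x,y} \<subseteq> s) \<Longrightarrow> v \<noteq> x \<Longrightarrow> v \<noteq> y \<Longrightarrow> (\<exists>s\<in>B. {x,y} \<subseteq> s)"
    using s0 by auto
  have ev: "\<And>x y. (\<exists>s\<in>insert ?N B. {x,y} \<subseteq> s) \<Longrightarrow> x = v \<Longrightarrow> y \<in> ?N"
    using glue(3) by auto
  have ev2: "\<And>x y. (\<exists>s\<in>insert ?N B. {x,y} \<subseteq> s) \<Longrightarrow> y = v \<Longrightarrow> x \<in> ?N"
    using glue(3) by auto
  have nb: "\<And>x y. x \<in> ?N \<Longrightarrow> y \<in> ?N \<Longrightarrow> (\<exists>s\<in>insert ?N B. {x,y} \<subseteq> s)"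
    by blast
  show ?case
  proof (cases "v \<in> {p,q,r,w}")
    case False
    then have "\<exists>s\<in>B. {q,w} \<subseteq> s" using glue.IH[of p r q w] glue.prems ed by auto
    then show ?thesis by auto
  next
    case True
    then consider "v = p" | "v = q" | "v = r" | "v = w" by auto
    then show ?thesis
    proof cases
      case 1 then have "q \<in> ?N" "w \<in> ?N" using ev[OF glue.prems(3)] ev2[OF glue.prems(6)] by auto
      then show ?thesis by (rule nb)
    next
      case 2 then have "p \<in> ?N" "r \<in> ?N" using ev2[OF glue.prems(3)] ev[OF glue.prems(4)] by auto
      then show ?thesis using glue.prems(7) nb by blast
    next
      case 3 then have "q \<in> ?N" "w \<in> ?N" using ev2[OF glue.prems(4)] ev[OF glue.prems(5)] by auto
      then show ?thesis by (rule nb)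
    next
      case 4 then have "p \<in> ?N" "r \<in> ?N" using ev2[OF glue.prems(5)] ev[OF glue.prems(6)] by auto
      then show ?thesis using glue.prems(7) nb by blast
    qed
  qed
qed

lemma pig3: "finite Z \<Longrightarrow> card Z \<le> 2 \<Longrightarrow> z1 \<in> Z \<Longrightarrow> z2 \<in> Z \<Longrightarrow> z3 \<in> Z \<Longrightarrow> z1 = z2 \<or> z1 = z3 \<or> z2 = z3"
proof (rule ccontr)
  assume a: "finite Z" "card Z \<le> 2" "z1 \<in> Z" "z2 \<in> Z" "z3 \<in> Z" "\<not> (z1 = z2 \<or> z1 = z3 \<or> z2 = z3)"
  then have "card {z1,z2,z3} = 3" by auto
  moreover have "card {z1,z2,z3} \<le> card Z" using a by (intro card_mono) auto
  ultimately show False using a(2) by simp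
qed

lemma tri_form: "card u = 3 \<Longrightarrow> e \<subseteq> u \<Longrightarrow> card e = 2 \<Longrightarrow> u \<subseteq> A \<Longrightarrow> \<exists>z\<in>A - e. u = insert z e"
proof -
  assume a: "card u = 3" "e \<subseteq> u" "card e = 2" "u \<subseteq> A"
  have fu: "finite u" using a(1) by (intro card_ge_0_finite) simp
  have "e \<noteq> u" using a by auto
  then obtain z where z: "z \<in> u" "z \<notin> e" using a(2) by blast
  have fe: "finite e" using fu a(2) finite_subset by blast
  have "insert z e \<subseteq> u" using z a(2) by auto
  moreover have "card (insert z e) = 3" using z fe a(3) by simp
  ultimately have "insert z e = u" using fu a(1) by (metis card_subset_eq)
  then show ?thesis using z a(4) by blast
qed

lemma three_in_A: "finite A \<Longrightarrow> card A = 4 \<Longrightarrow> card e = 2 \<Longrightarrow> e \<subseteq> A \<Longrightarrow>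
   card u1 = 3 \<Longrightarrow> card u2 = 3 \<Longrightarrow> card u3 = 3 \<Longrightarrow> e \<subseteq> u1 \<Longrightarrow> e \<subseteq> u2 \<Longrightarrow> e \<subseteq> u3 \<Longrightarrow>
   u1 \<subseteq> A \<Longrightarrow> u2 \<subseteq> A \<Longrightarrow> u3 \<subseteq> A \<Longrightarrow> u1 = u2 \<or> u1 = u3 \<or> u2 = u3"
proof -
  assume a: "finite A" "card A = 4" "card e = 2" "e \<subseteq> A"
   "card u1 = 3" "card u2 = 3" "card u3 = 3" "e \<subseteq> u1" "e \<subseteq> u2" "e \<subseteq> u3"
   "u1 \<subseteq> A" "u2 \<subseteq> A" "u3 \<subseteq> A"
  obtain z1 where z1: "z1 \<in> A - e" "u1 = insert z1 e" using tri_form a by metis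
  obtain z2 where z2: "z2 \<in> A - e" "u2 = insert z2 e" using tri_form a by metis
  obtain z3 where z3: "z3 \<in> A - e" "u3 = insert z3 e" using tri_form a by metis
  have "card (A - e) = 2" using a(1-4) by (simp add: card_Diff_subset finite_subset)
  then have "z1 = z2 \<or> z1 = z3 \<or> z2 = z3" using pig3[of "A - e"] z1 z2 z3 a(1) by auto
  then show ?thesis using z1 z2 z3 by auto
qed


lemma I7: "stacked_ball B \<Longrightarrow> card e = 2 \<Longrightarrow> u1 \<in> boundary_tris B \<Longrightarrow> u2 \<in> boundary_tris B \<Longrightarrow> u3 \<in> boundary_tris B
  \<Longrightarrow> e \<subseteq> u1 \<Longrightarrow> e \<subseteq> u2 \<Longrightarrow> e \<subseteq> u3 \<Longrightarrow> u1 = u2 \<or> u1 = u3 \<or> u2 = u3"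
proof (induction arbitrary: u1 u2 u3 rule: stacked_ball.induct)
  case (single s)
  have "finite s" using single(1) by (intro card_ge_0_finite) simp
  moreover have "u1 \<subseteq> s" "u2 \<subseteq> s" "u3 \<subseteq> s" using bd_ex single by blast+
  moreover have "card u1 = 3" "card u2 = 3" "card u3 = 3" using bd_card single by blast+
  ultimately show ?case using three_in_A[of s e u1 u2 u3] single by auto
next
  case (glue B t v)
  note gf = glue_facts[OF glue(2,3)]
  have fB: "finite B" using stacked_finite[OF glue(1)] .
  note bg = bd_glue[OF fB glue(2,3)]
  show ?case
  proof (cases "v \<in> e")
    case True
    have sub: "\<And>u. u \<in> boundary_tris (insert (insert v t) B) \<Longrightarrow> e \<subseteq> u \<Longrightarrow> u \<subseteq> insert v t"
    proof -
      fix u assume u: "u \<in> boundary_tris (insert (insert v t) B)" "e \<subseteq> u"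
      have "v \<in> u" using u True by auto
      moreover have "\<not> (u \<in> boundary_tris B)" using bd_ex[of u B] glue(3) \<open>v \<in> u\<close> by auto
      ultimately show "u \<subseteq> insert v t" using u bg by blast
    qed
    have "e \<subseteq> insert v t" using sub glue.prems by blast
    moreover have "u1 \<subseteq> insert v t" "u2 \<subseteq> insert v t" "u3 \<subseteq> insert v t" using sub glue.prems by blast+
    moreover have "card u1 = 3" "card u2 = 3" "card u3 = 3" using bd_card glue.prems by blast+
    ultimately show ?thesis using three_in_A[of "insert v t" e u1 u2 u3] glue.prems gf by auto
  next
    case False
    have fe: "finite e" using glue.prems(1) by (intro card_ge_0_finite) simp
    have cl: "\<And>u. u \<in> boundary_tris (insert (insert v t) B) \<Longrightarrow> e \<subseteq> u \<Longrightarrow>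
       (u \<in> boundary_tris B \<and> u \<noteq> t \<and> v \<notin> u) \<or> (u = insert v e \<and> e \<subseteq> t)"
    proof -
      fix u assume u: "u \<in> boundary_tris (insert (insert v t) B)" "e \<subseteq> u"
      show "(u \<in> boundary_tris B \<and> u \<noteq> t \<and> v \<notin> u) \<or> (u = insert v e \<and> e \<subseteq> t)"
      proof (cases "u \<in> boundary_tris B \<and> u \<noteq> t")
        case False
        then have u3: "card u = 3" "v \<in> u" "u \<subseteq> insert v t" using u bg by auto
        have "insert v e \<subseteq> u" using u3 u by auto
        moreover have "card (insert v e) = 3" using fe \<open>v \<notin> e\<close> glue.prems(1) by simp
        moreover have "finite u" using u3 by (intro card_ge_0_finite) simp
        ultimately have "u = insert v e" using u3 by (metis card_subset_eq)
        moreover have "e \<subseteq> t" using u u3 \<open>v \<notin> e\<close> by auto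
        ultimately show ?thesis by blast
      qed (use bd_ex[of u B] glue(3) in blast)
    qed
    have IH: "\<And>x y z. x \<in> boundary_tris B \<Longrightarrow> y \<in> boundary_tris B \<Longrightarrow> z \<in> boundary_tris B \<Longrightarrow>
       e \<subseteq> x \<Longrightarrow> e \<subseteq> y \<Longrightarrow> e \<subseteq> z \<Longrightarrow> x = y \<or> x = z \<or> y = z"
      using glue.IH glue.prems(1) by blast
    have c1: "(u1 \<in> boundary_tris B \<and> u1 \<noteq> t \<and> v \<notin> u1) \<or> (u1 = insert v e \<and> e \<subseteq> t)" using cl glue.prems by blast
    have c2: "(u2 \<in> boundary_tris B \<and> u2 \<noteq> t \<and> v \<notin> u2) \<or> (u2 = insert v e \<and> e \<subseteq> t)" using cl glue.prems by blast
    have c3: "(u3 \<in> boundary_tris B \<and> u3 \<noteq> t \<and> v \<notin> u3) \<or> (u3 = insert v e \<and> e \<subseteq> t)" using cl glue.prems by blast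
    have tb: "t \<in> boundary_tris B" by fact
    show ?thesis
    proof (cases "u1 = insert v e")
      case T1: True
      show ?thesis
      proof (cases "u2 = insert v e")
        case True then show ?thesis using T1 by simp
      next
        case F2: False
        show ?thesis
        proof (cases "u3 = insert v e")
          case True then show ?thesis using T1 by simp
        next
          case False
          have "e \<subseteq> t" using c1 T1 by auto
          then have "t = u2 \<or> t = u3 \<or> u2 = u3" using IH[of t u2 u3] tb c2 c3 F2 False glue.prems by blast
          then show ?thesis using c2 c3 F2 False by blast
        qed
      qed
    next
      case F1: False
      then have o1: "u1 \<in> boundary_tris B" "u1 \<noteq> t" using c1 by auto
      show ?thesis
      proof (cases "u2 = insert v e")
        case T2: True
        show ?thesis
        proof (cases "u3 = insert v e")
          case True then show ?thesis using T2 by simp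
        next
          case False
          have "e \<subseteq> t" using c2 T2 by auto
          then have "t = u1 \<or> t = u3 \<or> u1 = u3" using IH[of t u1 u3] tb o1 c3 False glue.prems by blast
          then show ?thesis using o1 c3 False by blast
        qed
      next
        case F2: False
        then have o2: "u2 \<in> boundary_tris B" "u2 \<noteq> t" using c2 by auto
        show ?thesis
        proof (cases "u3 = insert v e")
          case True
          have "e \<subseteq> t" using c3 True by auto
          then have "t = u1 \<or> t = u2 \<or> u1 = u2" using IH[of t u1 u2] tb o1 o2 glue.prems by blast
          then show ?thesis using o1 o2 by blast
        next
          case False
          then have o3: "u3 \<in> boundary_tris B" using c3 by auto
          show ?thesis using IH[of u1 u2 u3] o1 o2 o3 glue.prems by blast
        qed
      qed
    qed
  qed
qed



lemma inj_img_subset: "inj_on f A \<Longrightarrow> X \<subseteq> A \<Longrightarrow> Y \<subseteq> A \<Longrightarrow> f ` X \<subseteq> f ` Y \<longleftrightarrow> X \<subseteq> Y"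
  unfolding inj_on_def by blast

lemma cnt_image:
  assumes inj: "inj_on f (\<Union>B)" and u0: "u0 \<subseteq> \<Union>B"
  shows "cnt ((`) f ` B) (f ` u0) = cnt B u0"
proof -
  have eq: "{s'\<in>(`) f ` B. f ` u0 \<subseteq> s'} = (`) f ` {s\<in>B. u0 \<subseteq> s}"
  proof
    show "{s'\<in>(`) f ` B. f ` u0 \<subseteq> s'} \<subseteq> (`) f ` {s\<in>B. u0 \<subseteq> s}"
    proof
      fix s' assume "s' \<in> {s'\<in>(`) f ` B. f ` u0 \<subseteq> s'}"
      then obtain s where s: "s \<in> B" "s' = f ` s" "f ` u0 \<subseteq> f ` s" by auto
      then have "u0 \<subseteq> s" using inj_img_subset[OF inj u0] by auto
      then show "s' \<in> (`) f ` {s\<in>B. u0 \<subseteq> s}" using s by auto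
    qed
  next
    show "(`) f ` {s\<in>B. u0 \<subseteq> s} \<subseteq> {s'\<in>(`) f ` B. f ` u0 \<subseteq> s'}" by auto
  qed
  have "inj_on ((`) f) {s\<in>B. u0 \<subseteq> s}"
    by (rule inj_onI) (use inj_on_image_eq_iff[OF inj] in auto)
  then show ?thesis unfolding cnt_def eq by (rule card_image)
qed

lemma bd_image:
  assumes inj: "inj_on f (\<Union>B)"
  shows "boundary_tris ((`) f ` B) = (`) f ` boundary_tris B"
proof
  show "boundary_tris ((`) f ` B) \<subseteq> (`) f ` boundary_tris B"
  proof
    fix u assume u: "u \<in> boundary_tris ((`) f ` B)"
    then obtain s' where "s' \<in> (`) f ` B" "u \<subseteq> s'" using bd_ex[OF u] by blast
    then obtain s where s: "s \<in> B" "u \<subseteq> f ` s" by auto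
    then obtain u0 where u0: "u0 \<subseteq> s" "u = f ` u0" by (auto simp: subset_image_iff)
    have sub: "u0 \<subseteq> \<Union>B" using u0 s by auto
    have "card u0 = card u" using u0 inj_on_subset[OF inj sub] card_image by metis
    then have "u0 \<in> boundary_tris B" using u cnt_image[OF inj sub] u0 by (simp add: bd_iff)
    then show "u \<in> (`) f ` boundary_tris B" using u0 by blast
  qed
next
  show "(`) f ` boundary_tris B \<subseteq> boundary_tris ((`) f ` B)"
  proof
    fix u assume "u \<in> (`) f ` boundary_tris B"
    then obtain u0 where u0: "u0 \<in> boundary_tris B" "u = f ` u0" by auto
    have sub: "u0 \<subseteq> \<Union>B" using bd_ex[OF u0(1)] by auto
    have "card u0 = card u" using u0 inj_on_subset[OF inj sub] card_image by metis
    then show "u \<in> boundary_tris ((`) f ` B)" using u0 cnt_image[OF inj sub] by (simp add: bd_iff)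
  qed
qed

lemma rename: "stacked_ball B \<Longrightarrow> inj_on f (\<Union>B) \<Longrightarrow> stacked_ball ((`) f ` B)"
proof (induction rule: stacked_ball.induct)
  case (single s)
  have "card (f ` s) = 4" using single card_image by (metis ccpo_Sup_singleton)
  then show ?case by (simp add: stacked_ball.single)
next
  case (glue B t v)
  have injB: "inj_on f (\<Union>B)" using glue.prems by (rule inj_on_subset) auto
  have st: "stacked_ball ((`) f ` B)" using glue.IH injB .
  have tb: "f ` t \<in> boundary_tris ((`) f ` B)" using bd_image[OF injB] glue(2) by blast
  have "f v \<notin> f ` (\<Union>B)"
    using inj_on_image_mem_iff[OF glue.prems, of v "\<Union>B"] glue(3) by auto
  then have fv: "f v \<notin> \<Union>((`) f ` B)" by auto
  have "(`) f ` insert (insert v t) B = insert (insert (f v) (f ` t)) ((`) f ` B)" by simp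
  then show ?case using stacked_ball.glue[OF st tb fv] by simp
qed

lemma sphere_iff: "stacked_sphere S \<longleftrightarrow> (\<exists>B. stacked_ball B \<and> boundary_tris B = S)"
proof
  assume "stacked_sphere S"
  then obtain B :: "'a set set" and f :: "'a \<Rightarrow> 'a" where B: "stacked_ball B" "inj_on f (\<Union>B)" "(\<lambda>t. f ` t) ` boundary_tris B = S"
    unfolding stacked_sphere_def by blast
  then show "\<exists>B. stacked_ball B \<and> boundary_tris B = S"
    using rename[OF B(1,2)] bd_image[OF B(2)] by auto
next
  assume "\<exists>B. stacked_ball B \<and> boundary_tris B = S"
  then obtain B where "stacked_ball B" "boundary_tris B = S" by blast
  then show "stacked_sphere S" unfolding stacked_sphere_def
    by (intro exI[of _ B] exI[of _ id]) auto
qed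

lemma edges_bd: "stacked_ball B \<Longrightarrow> edges2 (boundary_tris B) = {e. card e = 2 \<and> (\<exists>s\<in>B. e \<subseteq> s)}"
proof (rule set_eqI, rule iffI)
  fix e assume st: "stacked_ball B" and "e \<in> edges2 (boundary_tris B)"
  then obtain t where t: "card e = 2" "t \<in> boundary_tris B" "e \<subseteq> t" by (auto simp: edges2_def)
  obtain s where "s \<in> B" "t \<subseteq> s" using bd_ex[OF t(2)] by blast
  then show "e \<in> {e. card e = 2 \<and> (\<exists>s\<in>B. e \<subseteq> s)}" using t by blast
next
  fix e assume st: "stacked_ball B" and "e \<in> {e. card e = 2 \<and> (\<exists>s\<in>B. e \<subseteq> s)}"
  then obtain s where s: "card e = 2" "s \<in> B" "e \<subseteq> s" by blast
  obtain u where "u \<in> boundary_tris B" "e \<subseteq> u" using I4[OF st s(2,3,1)] by blast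
  then show "e \<in> edges2 (boundary_tris B)" using s by (auto simp: edges2_def)
qed

lemma card2: "x \<noteq> y \<Longrightarrow> card {x,y} = 2" by simp

lemma clique_bd: "stacked_ball B \<Longrightarrow> clique_tets (boundary_tris B) = B"
proof
  assume st: "stacked_ball B"
  show "clique_tets (boundary_tris B) \<subseteq> B"
  proof
    fix K assume "K \<in> clique_tets (boundary_tris B)"
    then have K: "card K = 4" "\<forall>x\<in>K. \<forall>y\<in>K. x \<noteq> y \<longrightarrow> {x,y} \<in> edges2 (boundary_tris B)"
      by (auto simp: clique_tets_def)
    then have "\<forall>x\<in>K. \<forall>y\<in>K. x \<noteq> y \<longrightarrow> (\<exists>s\<in>B. {x,y} \<subseteq> s)" using edges_bd[OF st] by auto
    then show "K \<in> B" using I5[OF st K(1)] by blast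
  qed
next
  assume st: "stacked_ball B"
  show "B \<subseteq> clique_tets (boundary_tris B)"
  proof
    fix s assume s: "s \<in> B"
    have "\<forall>x\<in>s. \<forall>y\<in>s. x \<noteq> y \<longrightarrow> {x,y} \<in> edges2 (boundary_tris B)"
      using s edges_bd[OF st] by auto
    then show "s \<in> clique_tets (boundary_tris B)" using stacked_card[OF st s] by (simp add: clique_tets_def)
  qed
qed

lemma tet_of_bd: "stacked_ball B \<Longrightarrow> u \<in> boundary_tris B \<Longrightarrow> s \<in> B \<Longrightarrow> u \<subseteq> s \<Longrightarrow> tet_of (boundary_tris B) u = s"
  unfolding tet_of_def clique_bd
  by (rule the_equality) (simp, metis bd_unique)



lemma sub4:
  assumes d: "distinct [p,q,r,w]" and c: "card u = 3" and s: "u \<subseteq> {p,q,r,w}"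
  shows "u = {p,q,r} \<or> u = {p,q,w} \<or> u = {p,r,w} \<or> u = {q,r,w}"
proof -
  have "\<not> {p,q,r,w} \<subseteq> u"
  proof
    assume "{p,q,r,w} \<subseteq> u"
    then have "card {p,q,r,w} \<le> card u" using c by (intro card_mono) (auto intro: card_ge_0_finite)
    then show False using d c by simp
  qed
  then obtain z where z: "z \<in> {p,q,r,w}" "z \<notin> u" by blast
  then have "u \<subseteq> {p,q,r,w} - {z}" using s by auto
  moreover have "card ({p,q,r,w} - {z}) = 3" using d z by (simp add: card_Diff_singleton)
  ultimately have "u = {p,q,r,w} - {z}" using c by (metis card_subset_eq finite.emptyI finite_Diff finite_insert)
  moreover have "z = p \<or> z = q \<or> z = r \<or> z = w" using z by auto
  moreover have "{p,q,r,w} - {p} = {q,r,w}" "{p,q,r,w} - {q} = {p,r,w}"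
    "{p,q,r,w} - {r} = {p,q,w}" "{p,q,r,w} - {w} = {p,q,r}" using d by auto
  ultimately show ?thesis by metis
qed

lemma cnt_remove: "finite B \<Longrightarrow> s \<in> B \<Longrightarrow> cnt B u = cnt (B - {s}) u + (if u \<subseteq> s then 1 else 0)"
  using cnt_insert[of "B - {s}" s u] by (simp add: insert_absorb)

lemma ind_L:
  assumes d: "distinct [a,b,c,d,x]" and c: "card t = 3" and nc: "c \<notin> t"
    and n1: "t \<noteq> {a,b,d}" and n2: "t \<noteq> {a,b,x}"
  shows "(if t \<subseteq> {a,b,d,x} then 1 else 0) = (if t \<subseteq> {a,c,d,x} then 1 else 0) + (if t \<subseteq> {b,c,d,x} then (1::nat) else 0)"
proof (cases "t \<subseteq> {a,b,d,x}")
  case True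
  have dd: "distinct [a,b,d,x]" using d by auto
  have "t = {a,b,d} \<or> t = {a,b,x} \<or> t = {a,d,x} \<or> t = {b,d,x}" using sub4[OF dd c True] by blast
  then have "t = {a,d,x} \<or> t = {b,d,x}" using n1 n2 by blast
  then show ?thesis using d by auto
next
  case False
  then have "\<not> t \<subseteq> {a,c,d,x}" "\<not> t \<subseteq> {b,c,d,x}" using nc by auto
  then show ?thesis using False by simp
qed

lemma ind_M:
  assumes d: "distinct [a,b,c,d,x]" and c: "card t = 3" and ncd: "\<not> {c,d} \<subseteq> t"
    and n1: "t \<noteq> {a,b,c}" and n2: "t \<noteq> {a,b,d}" and n3: "t \<noteq> {a,b,x}"
  shows "(if t \<subseteq> {a,b,c,x} then 1 else 0) + (if t \<subseteq> {a,b,d,x} then 1 else 0)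
       = (if t \<subseteq> {a,c,d,x} then 1 else 0) + (if t \<subseteq> {b,c,d,x} then (1::nat) else 0)"
proof -
  have d1: "distinct [a,b,c,x]" "distinct [a,b,d,x]" "distinct [a,c,d,x]" "distinct [b,c,d,x]" using d by auto
  show ?thesis
  proof (cases "t \<subseteq> {a,b,c,x}")
    case True
    then have "t = {a,b,c} \<or> t = {a,b,x} \<or> t = {a,c,x} \<or> t = {b,c,x}" using sub4[OF d1(1) c True] by blast
    then have "t = {a,c,x} \<or> t = {b,c,x}" using n1 n3 by blast
    then show ?thesis using d by auto
  next
    case F1: False
    show ?thesis
    proof (cases "t \<subseteq> {a,b,d,x}")
      case True
      then have "t = {a,b,d} \<or> t = {a,b,x} \<or> t = {a,d,x} \<or> t = {b,d,x}" using sub4[OF d1(2) c True] by blast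
      then have "t = {a,d,x} \<or> t = {b,d,x}" using n2 n3 by blast
      then show ?thesis using d by auto
    next
      case F2: False
      have "\<not> t \<subseteq> {a,c,d,x}"
      proof
        assume "t \<subseteq> {a,c,d,x}"
        then have "t = {a,c,d} \<or> t = {a,c,x} \<or> t = {a,d,x} \<or> t = {c,d,x}" by (rule sub4[OF d1(3) c])
        then show False using ncd F1 F2 by auto
      qed
      moreover have "\<not> t \<subseteq> {b,c,d,x}"
      proof
        assume "t \<subseteq> {b,c,d,x}"
        then have "t = {b,c,d} \<or> t = {b,c,x} \<or> t = {b,d,x} \<or> t = {c,d,x}" by (rule sub4[OF d1(4) c])
        then show False using ncd F1 F2 by auto
      qed
      ultimately show ?thesis using F1 F2 by simp
    qed
  qed
qed



lemma glue2:
  assumes st: "stacked_ball B1" and t: "{b,d,x} \<in> boundary_tris B1" and c: "c \<notin> \<Union>B1" and a: "a \<notin> \<Union>B1"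
    and d: "distinct [a,b,c,d,x]"
  shows "stacked_ball (insert {a,c,d,x} (insert {b,c,d,x} B1))"
proof -
  have s2: "stacked_ball (insert (insert c {b,d,x}) B1)" using stacked_ball.glue[OF st t c] .
  have fB: "finite B1" using stacked_finite[OF st] .
  have "{c,d,x} \<in> boundary_tris (insert (insert c {b,d,x}) B1)"
    using bd_glue[OF fB t c, of "{c,d,x}"] d by auto
  moreover have "a \<notin> \<Union>(insert (insert c {b,d,x}) B1)" using a d by auto
  ultimately have "stacked_ball (insert (insert a {c,d,x}) (insert (insert c {b,d,x}) B1))"
    using stacked_ball.glue[OF s2] by blast
  moreover have "insert c {b,d,x} = {b,c,d,x}" "insert a {c,d,x} = {a,c,d,x}" by auto
  ultimately show ?thesis by simp
qed

lemma lemL: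
  "stacked_ball B0 \<Longrightarrow> {a,b,d,x} \<in> B0 \<Longrightarrow> distinct [a,b,c,d,x] \<Longrightarrow> {a,b,d} \<in> boundary_tris B0
   \<Longrightarrow> {a,b,x} \<in> boundary_tris B0 \<Longrightarrow> c \<notin> \<Union>B0
   \<Longrightarrow> stacked_ball (insert {a,c,d,x} (insert {b,c,d,x} (B0 - {{a,b,d,x}})))"
proof (induction rule: stacked_ball.induct)
  case (single s0)
  then have s0: "s0 = {a,b,d,x}" by simp
  have "card {b,c,d,x} = 4" using single by auto
  then have st: "stacked_ball {{b,c,d,x}}" by (rule stacked_ball.single)
  have "{c,d,x} \<in> boundary_tris {{b,c,d,x}}"
  proof -
    have "{s\<in>{{b,c,d,x}}. {c,d,x} \<subseteq> s} = {{b,c,d,x}}" by auto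
    then show ?thesis using single by (simp add: bd_iff cnt_def)
  qed
  moreover have "a \<notin> \<Union>{{b,c,d,x}}" using single by auto
  ultimately have "stacked_ball (insert (insert a {c,d,x}) {{b,c,d,x}})" by (rule stacked_ball.glue[OF st])
  moreover have "insert a {c,d,x} = {a,c,d,x}" by auto
  ultimately show ?case using s0 by simp
next
  case (glue B1 t v)
  let ?s = "{a,b,d,x}"
  let ?N = "insert v t"
  note gf = glue_facts[OF glue(2,3)]
  have fB: "finite B1" using stacked_finite[OF glue(1)] .
  have dist: "a \<noteq> b" "a \<noteq> c" "a \<noteq> d" "a \<noteq> x" "b \<noteq> c" "b \<noteq> d" "b \<noteq> x" "c \<noteq> d" "c \<noteq> x" "d \<noteq> x"
    using glue.prems(2) by auto
  have vc: "v \<noteq> c" using glue.prems(5) by auto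
  show ?case
  proof (cases "?N = ?s")
    case False
    then have sB1: "?s \<in> B1" using glue.prems(1) by simp
    have sub: "B1 \<subseteq> insert ?N B1" by auto
    have b1: "{a,b,d} \<in> boundary_tris B1" using bd_mono[OF glue.prems(3) sub sB1] by auto
    have b2: "{a,b,x} \<in> boundary_tris B1" using bd_mono[OF glue.prems(4) sub sB1] by auto
    have c1: "c \<notin> \<Union>B1" using glue.prems(5) by auto
    let ?B1' = "insert {a,c,d,x} (insert {b,c,d,x} (B1 - {?s}))"
    have st1: "stacked_ball ?B1'" using glue.IH[OF sB1 glue.prems(2) b1 b2 c1] .
    obtain s0 where s0: "s0 \<in> B1" "t \<subseteq> s0" using bd_ex[OF glue(2)] by blast
    have ct: "c \<notin> t" using s0 c1 by auto
    have t1: "t \<noteq> {a,b,d}"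
    proof
      assume "t = {a,b,d}"
      then have "?N = ?s" using bd_unique[OF glue.prems(3), of ?N ?s] sB1 by auto
      then show False using False by simp
    qed
    have t2: "t \<noteq> {a,b,x}"
    proof
      assume "t = {a,b,x}"
      then have "?N = ?s" using bd_unique[OF glue.prems(4), of ?N ?s] sB1 by auto
      then show False using False by simp
    qed
    have n1: "{a,c,d,x} \<notin> insert {b,c,d,x} (B1 - {?s})" using c1 dist by auto
    have n2: "{b,c,d,x} \<notin> B1 - {?s}" using c1 by auto
    have e1: "cnt B1 t = cnt (B1 - {?s}) t + (if t \<subseteq> ?s then 1 else 0)"
      using cnt_remove[OF fB sB1] .
    have e2: "cnt ?B1' t = cnt (B1 - {?s}) t + (if t \<subseteq> {a,c,d,x} then 1 else 0) + (if t \<subseteq> {b,c,d,x} then 1 else 0)"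
      using cnt_insert[OF _ n1, of t] cnt_insert[OF _ n2, of t] fB by simp
    have "cnt ?B1' t = cnt B1 t" using e1 e2 ind_L[OF glue.prems(2) gf[THEN conjunct1] ct t1 t2] by simp
    then have tb: "t \<in> boundary_tris ?B1'" using glue(2) by (simp add: bd_iff)
    have vn: "v \<notin> \<Union>?B1'" using glue(3) vc sB1 by auto
    have "stacked_ball (insert ?N ?B1')" using stacked_ball.glue[OF st1 tb vn] .
    moreover have "insert ?N ?B1' = insert {a,c,d,x} (insert {b,c,d,x} (insert ?N B1 - {?s}))"
      using False by auto
    ultimately show ?thesis by simp
  next
    case True
    have vN: "v \<in> ?s" using True by auto
    have nB: "?s \<notin> B1" using glue(3) True by auto
    have eqB: "insert ?N B1 - {?s} = B1" using True nB by auto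
    have teq: "t = ?s - {v}" using True gf by auto
    have c1: "c \<notin> \<Union>B1" using glue.prems(5) by auto
    have v1: "v \<notin> \<Union>B1" by fact
    consider "v = a" | "v = b" | "v = d" | "v = x" using vN by auto
    then show ?thesis
    proof cases
      case 1
      then have "t = {b,d,x}" using teq dist by auto
      then show ?thesis using glue2[OF glue(1) _ c1 _ glue.prems(2)] glue(2) v1 1 eqB by simp
    next
      case 2
      then have "t = {a,d,x}" using teq dist by auto
      moreover have db: "distinct [b,a,c,d,x]" using dist by auto
      ultimately have "stacked_ball (insert {b,c,d,x} (insert {a,c,d,x} B1))"
        using glue2[OF glue(1) _ c1 _ db] glue(2) v1 2 by (simp add: insert_commute)
      then show ?thesis using eqB by (simp add: insert_commute)
    next
      case 3
      then have "t = {a,b,x}" using teq dist by auto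
      then obtain s' where "s' \<in> B1" "{a,b,x} \<subseteq> s'" using bd_ex[OF glue(2)] by auto
      moreover have "s' \<noteq> ?N" using calculation nB True by auto
      ultimately show ?thesis using bd_unique[OF glue.prems(4), of s' ?N] True by auto
    next
      case 4
      then have "t = {a,b,d}" using teq dist by auto
      then obtain s' where "s' \<in> B1" "{a,b,d} \<subseteq> s'" using bd_ex[OF glue(2)] by auto
      moreover have "s' \<noteq> ?N" using calculation nB True by auto
      ultimately show ?thesis using bd_unique[OF glue.prems(3), of s' ?N] True by auto
    qed
  qed
qed



lemma lemM:
  "stacked_ball B \<Longrightarrow> {a,b,c,x} \<in> B \<Longrightarrow> {a,b,d,x} \<in> B \<Longrightarrow> distinct [a,b,c,d,x]
   \<Longrightarrow> {a,b,c} \<in> boundary_tris B \<Longrightarrow> {a,b,d} \<in> boundary_tris B \<Longrightarrow> (\<forall>s\<in>B. \<not> {c,d} \<subseteq> s)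
   \<Longrightarrow> stacked_ball (insert {a,c,d,x} (insert {b,c,d,x} (B - {{a,b,c,x},{a,b,d,x}})))"
proof (induction rule: stacked_ball.induct)
  case (single s0)
  then show ?case by auto
next
  case (glue B1 t v)
  let ?s1 = "{a,b,c,x}"
  let ?s2 = "{a,b,d,x}"
  let ?N = "insert v t"
  note gf = glue_facts[OF glue(2,3)]
  have fB: "finite B1" using stacked_finite[OF glue(1)] .
  have dist: "a \<noteq> b" "a \<noteq> c" "a \<noteq> d" "a \<noteq> x" "b \<noteq> c" "b \<noteq> d" "b \<noteq> x" "c \<noteq> d" "c \<noteq> x" "d \<noteq> x"
    using glue.prems(3) by auto
  have s12: "?s1 \<noteq> ?s2" using dist by auto
  show ?case
  proof (cases "?N = ?s1 \<or> ?N = ?s2")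
    case False
    then have sB1: "?s1 \<in> B1" "?s2 \<in> B1" using glue.prems(1,2) by auto
    have sub: "B1 \<subseteq> insert ?N B1" by auto
    have b1: "{a,b,c} \<in> boundary_tris B1" using bd_mono[OF glue.prems(4) sub sB1(1)] by auto
    have b2: "{a,b,d} \<in> boundary_tris B1" using bd_mono[OF glue.prems(5) sub sB1(2)] by auto
    have ncd: "\<forall>s\<in>B1. \<not> {c,d} \<subseteq> s" using glue.prems(6) by auto
    let ?C = "B1 - {?s1,?s2}"
    let ?B1' = "insert {a,c,d,x} (insert {b,c,d,x} ?C)"
    have st1: "stacked_ball ?B1'" using glue.IH[OF sB1 glue.prems(3) b1 b2 ncd] .
    obtain s0 where s0: "s0 \<in> B1" "t \<subseteq> s0" using bd_ex[OF glue(2)] by blast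
    have tcd: "\<not> {c,d} \<subseteq> t" using s0 ncd by auto
    have t1: "t \<noteq> {a,b,c}"
    proof
      assume "t = {a,b,c}"
      then have "?N = ?s1" using bd_unique[OF glue.prems(4), of ?N ?s1] sB1 by auto
      then show False using False by simp
    qed
    have t2: "t \<noteq> {a,b,d}"
    proof
      assume "t = {a,b,d}"
      then have "?N = ?s2" using bd_unique[OF glue.prems(5), of ?N ?s2] sB1 by auto
      then show False using False by simp
    qed
    have t3: "t \<noteq> {a,b,x}"
    proof
      assume "t = {a,b,x}"
      then have "?s1 = ?s2" using bd_unique[OF glue(2), of ?s1 ?s2] sB1 by auto
      then show False using s12 by simp
    qed
    have cdiff: "?C = B1 - {?s1} - {?s2}" by auto
    have fB1: "finite (B1 - {?s1})" using fB by simp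
    have s2B1: "?s2 \<in> B1 - {?s1}" using sB1 s12 by simp
    have e1: "cnt B1 t = cnt ?C t + (if t \<subseteq> ?s1 then 1 else 0) + (if t \<subseteq> ?s2 then 1 else 0)"
      using cnt_remove[OF fB sB1(1), of t] cnt_remove[OF fB1 s2B1, of t] cdiff by simp
    have ab: "{a,c,d,x} \<noteq> {b,c,d,x}"
    proof
      assume "{a,c,d,x} = {b,c,d,x}"
      then have "a \<in> {b,c,d,x}" by (metis insertI1)
      then show False using dist by auto
    qed
    have acB: "{a,c,d,x} \<notin> B1"
    proof
      assume "{a,c,d,x} \<in> B1"
      moreover have "{c,d} \<subseteq> {a,c,d,x}" by auto
      ultimately show False using ncd by blast
    qed
    have bcB: "{b,c,d,x} \<notin> B1"
    proof
      assume "{b,c,d,x} \<in> B1"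
      moreover have "{c,d} \<subseteq> {b,c,d,x}" by auto
      ultimately show False using ncd by blast
    qed
    have n1: "{a,c,d,x} \<notin> insert {b,c,d,x} ?C" using ab acB by simp
    have n2: "{b,c,d,x} \<notin> ?C" using bcB by simp
    have e2: "cnt ?B1' t = cnt ?C t + (if t \<subseteq> {a,c,d,x} then 1 else 0) + (if t \<subseteq> {b,c,d,x} then 1 else 0)"
      using cnt_insert[OF _ n1, of t] cnt_insert[OF _ n2, of t] fB by simp
    have "cnt ?B1' t = cnt B1 t"
      using e1 e2 ind_M[OF glue.prems(3) gf[THEN conjunct1] tcd t1 t2 t3] by simp
    then have tb: "t \<in> boundary_tris ?B1'" using glue(2) by (simp add: bd_iff)
    have vn: "v \<notin> \<Union>?B1'" using glue(3) sB1 by auto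
    have "stacked_ball (insert ?N ?B1')" using stacked_ball.glue[OF st1 tb vn] .
    moreover have "insert ?N B1 - {?s1,?s2} = insert ?N ?C" using False by (simp add: insert_Diff_if)
    ultimately show ?thesis by (simp add: insert_commute)
  next
    case True
    then show ?thesis
    proof
      assume N1: "?N = ?s1"
      then have s2B: "?s2 \<in> B1" using glue.prems(2) s12 by auto
      have "v \<in> ?s1" "v \<notin> ?s2" using N1 glue(3) s2B by auto
      then have vc: "v = c" by auto
      have "t = ?s1 - {v}" using N1 gf by auto
      then have tt: "t = {a,b,x}" using vc dist by auto
      have sub: "B1 \<subseteq> insert ?N B1" by auto
      have b2: "{a,b,d} \<in> boundary_tris B1" using bd_mono[OF glue.prems(5) sub s2B] by auto
      have "stacked_ball (insert {a,c,d,x} (insert {b,c,d,x} (B1 - {?s2})))"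
        using lemL[OF glue(1) s2B glue.prems(3) b2] glue(2,3) tt vc by simp
      moreover have "insert ?N B1 - {?s1,?s2} = B1 - {?s2}" using N1 glue(3) by auto
      ultimately show ?thesis by simp
    next
      assume N2: "?N = ?s2"
      then have s1B: "?s1 \<in> B1" using glue.prems(1) s12 by auto
      have "v \<in> ?s2" "v \<notin> ?s1" using N2 glue(3) s1B by auto
      then have vd: "v = d" by auto
      have "t = ?s2 - {v}" using N2 gf by auto
      then have tt: "t = {a,b,x}" using vd dist by auto
      have sub: "B1 \<subseteq> insert ?N B1" by auto
      have b1: "{a,b,c} \<in> boundary_tris B1" using bd_mono[OF glue.prems(4) sub s1B] by auto
      have dd: "distinct [a,b,d,c,x]" using dist by auto
      have "stacked_ball (insert {a,d,c,x} (insert {b,d,c,x} (B1 - {?s1})))"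
        using lemL[OF glue(1) s1B dd b1] glue(2,3) tt vd by simp
      moreover have "insert ?N B1 - {?s1,?s2} = B1 - {?s1}" using N2 glue(3) by auto
      moreover have "{a,d,c,x} = {a,c,d,x}" "{b,d,c,x} = {b,c,d,x}" by auto
      ultimately show ?thesis by simp
    qed
  qed
qed



lemma lemM_bd:
  assumes st: "stacked_ball B" and s1: "{a,b,c,x} \<in> B" and s2: "{a,b,d,x} \<in> B" and dd: "distinct [a,b,c,d,x]"
    and b1: "{a,b,c} \<in> boundary_tris B" and b2: "{a,b,d} \<in> boundary_tris B" and ncd: "\<forall>s\<in>B. \<not> {c,d} \<subseteq> s"
  shows "boundary_tris (insert {a,c,d,x} (insert {b,c,d,x} (B - {{a,b,c,x},{a,b,d,x}})))
     = (boundary_tris B - {{a,b,c},{a,b,d}}) \<union> {{a,c,d},{b,c,d}}"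
proof -
  let ?s1 = "{a,b,c,x}"
  let ?s2 = "{a,b,d,x}"
  let ?C = "B - {?s1,?s2}"
  let ?B' = "insert {a,c,d,x} (insert {b,c,d,x} ?C)"
  have dist: "a \<noteq> b" "a \<noteq> c" "a \<noteq> d" "a \<noteq> x" "b \<noteq> c" "b \<noteq> d" "b \<noteq> x" "c \<noteq> d" "c \<noteq> x" "d \<noteq> x"
    using dd by auto
  have fB: "finite B" using stacked_finite[OF st] .
  have s12: "?s1 \<noteq> ?s2" using dist by auto
  have cdiff: "?C = B - {?s1} - {?s2}" by auto
  have fB1: "finite (B - {?s1})" using fB by simp
  have s2B1: "?s2 \<in> B - {?s1}" using s2 s12 by simp
  have eB: "\<And>u. cnt B u = cnt ?C u + (if u \<subseteq> ?s1 then 1 else 0) + (if u \<subseteq> ?s2 then 1 else 0)"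
    using cnt_remove[OF fB s1] cnt_remove[OF fB1 s2B1] cdiff by simp
  have ab: "{a,c,d,x} \<noteq> {b,c,d,x}"
  proof
    assume "{a,c,d,x} = {b,c,d,x}"
    then have "a \<in> {b,c,d,x}" by (metis insertI1)
    then show False using dist by auto
  qed
  have acB: "{a,c,d,x} \<notin> B"
  proof
    assume "{a,c,d,x} \<in> B"
    moreover have "{c,d} \<subseteq> {a,c,d,x}" by auto
    ultimately show False using ncd by blast
  qed
  have bcB: "{b,c,d,x} \<notin> B"
  proof
    assume "{b,c,d,x} \<in> B"
    moreover have "{c,d} \<subseteq> {b,c,d,x}" by auto
    ultimately show False using ncd by blast
  qed
  have n1: "{a,c,d,x} \<notin> insert {b,c,d,x} ?C" using ab acB by blast
  have n2: "{b,c,d,x} \<notin> ?C" using bcB by blast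
  have eB': "\<And>u. cnt ?B' u = cnt ?C u + (if u \<subseteq> {a,c,d,x} then 1 else 0) + (if u \<subseteq> {b,c,d,x} then 1 else 0)"
    using cnt_insert[OF _ n1] cnt_insert[OF _ n2] fB by simp
  have cC: "cnt ?C u \<le> cnt B u" for u using eB[of u] by linarith
  show ?thesis
  proof (rule set_eqI)
    fix u
    show "u \<in> boundary_tris ?B' \<longleftrightarrow> u \<in> (boundary_tris B - {{a,b,c},{a,b,d}}) \<union> {{a,c,d},{b,c,d}}"
    proof (cases "card u = 3")
      case False
      moreover have "card {a,c,d} = 3" "card {b,c,d} = 3" using dist by auto
      ultimately show ?thesis by (auto simp: bd_iff)
    next
      case cu: True
      consider (abc) "u = {a,b,c}" | (abd) "u = {a,b,d}" | (abx) "u = {a,b,x}" | (cd) "{c,d} \<subseteq> u"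
        | (other) "u \<noteq> {a,b,c}" "u \<noteq> {a,b,d}" "u \<noteq> {a,b,x}" "\<not> {c,d} \<subseteq> u" by blast
      then show ?thesis
      proof cases
        case abc
        have "cnt B u = 1" using b1 abc by (simp add: bd_iff)
        moreover have "u \<subseteq> ?s1" "\<not> u \<subseteq> ?s2" "\<not> u \<subseteq> {a,c,d,x}" "\<not> u \<subseteq> {b,c,d,x}" using abc dist by auto
        ultimately have "cnt ?B' u = 0" using eB[of u] eB'[of u] by simp
        moreover have "u \<noteq> {a,c,d}" "u \<noteq> {b,c,d}" using abc dist by (auto simp: insert_eq_iff)
        ultimately show ?thesis using abc by (auto simp: bd_iff)
      next
        case abd
        have "cnt B u = 1" using b2 abd by (simp add: bd_iff)
        moreover have "\<not> u \<subseteq> ?s1" "u \<subseteq> ?s2" "\<not> u \<subseteq> {a,c,d,x}" "\<not> u \<subseteq> {b,c,d,x}" using abd dist by auto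
        ultimately have "cnt ?B' u = 0" using eB[of u] eB'[of u] by simp
        moreover have "u \<noteq> {a,c,d}" "u \<noteq> {b,c,d}" using abd dist by (auto simp: insert_eq_iff)
        ultimately show ?thesis using abd by (auto simp: bd_iff)
      next
        case abx
        have "cnt B u \<le> 2" using I3[OF st cu] .
        moreover have "u \<subseteq> ?s1" "u \<subseteq> ?s2" "\<not> u \<subseteq> {a,c,d,x}" "\<not> u \<subseteq> {b,c,d,x}" using abx dist by auto
        ultimately have "cnt ?B' u = 0" "cnt B u = 2" using eB[of u] eB'[of u] by simp_all
        moreover have "u \<noteq> {a,c,d}" "u \<noteq> {b,c,d}" using abx dist by (auto simp: insert_eq_iff)
        ultimately show ?thesis by (auto simp: bd_iff)
      next
        case cd
        have "cnt B u = 0" using fB ncd cd by (intro cnt_zero) auto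
        then have c0: "cnt ?C u = 0" using cC[of u] by simp
        have "u \<notin> boundary_tris B" using \<open>cnt B u = 0\<close> by (simp add: bd_iff)
        moreover have "u \<in> boundary_tris ?B' \<longleftrightarrow> u = {a,c,d} \<or> u = {b,c,d}"
        proof -
          have d3: "distinct [a,c,d,x]" "distinct [b,c,d,x]" using dist by auto
          have q1: "u \<subseteq> {a,c,d,x} \<Longrightarrow> u = {a,c,d} \<or> u = {c,d,x}"
            using sub4[OF d3(1) cu] cd dist by auto
          have q2: "u \<subseteq> {b,c,d,x} \<Longrightarrow> u = {b,c,d} \<or> u = {c,d,x}"
            using sub4[OF d3(2) cu] cd dist by auto
          have cdx: "{c,d,x} \<subseteq> {a,c,d,x}" "{c,d,x} \<subseteq> {b,c,d,x}" by auto
          have "{a,c,d} \<noteq> {c,d,x}" "{b,c,d} \<noteq> {c,d,x}" "\<not> {a,c,d} \<subseteq> {b,c,d,x}" "\<not> {b,c,d} \<subseteq> {a,c,d,x}"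
            using dist by (auto simp: insert_eq_iff)
          then show ?thesis using q1 q2 cdx eB'[of u] c0 cu by (auto simp: bd_iff)
        qed
        ultimately show ?thesis by auto
      next
        case other
        have "cnt ?B' u = cnt B u" using eB[of u] eB'[of u] ind_M[OF dd cu other(4) other(1-3)] by simp
        moreover have "u \<noteq> {a,c,d}" "u \<noteq> {b,c,d}" using other(4) by auto
        ultimately show ?thesis using other cu by (auto simp: bd_iff)
      qed
    qed
  qed
qed



lemma tet_split: "card s = 4 \<Longrightarrow> u \<subseteq> s \<Longrightarrow> card u = 3 \<Longrightarrow> \<exists>x. x \<notin> u \<and> s = insert x u"
proof -
  assume a: "card s = 4" "u \<subseteq> s" "card u = 3"
  have fs: "finite s" using a(1) by (intro card_ge_0_finite) simp
  have "card (s - u) = 1" using a fs by (simp add: card_Diff_subset finite_subset)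
  then obtain x where "s - u = {x}" by (auto simp: card_1_singleton_iff)
  then have "x \<notin> u" "s = insert x u" using a(2) by auto
  then show ?thesis by blast
qed

theorem theorem4p1:
  fixes S :: "'a set set" and a b c d :: 'a
  assumes "stacked_sphere S"
    and "{a, b, c} \<in> S" and "{a, b, d} \<in> S"
    and "card {a, b, c} = 3" and "card {a, b, d} = 3" and "c \<noteq> d"
  shows "(dual_adj (clique_tets S) (tet_of S {a, b, c}) (tet_of S {a, b, d})
            \<longrightarrow> {c, d} \<notin> edges2 S \<and> stacked_sphere (edge_flip S a b c d))
       \<and> ({c, d} \<notin> edges2 S \<and> stacked_sphere (edge_flip S a b c d)
            \<longrightarrow> dual_adj (clique_tets S) (tet_of S {a, b, c}) (tet_of S {a, b, d}))"
proof -
  obtain B where st: "stacked_ball B" and SB: "boundary_tris B = S" using assms(1) sphere_iff by blast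
  have d1: "a \<noteq> b" "a \<noteq> c" "b \<noteq> c" using assms(4) by (auto simp: card_insert_if split: if_splits)
  have d2: "a \<noteq> d" "b \<noteq> d" using assms(5) by (auto simp: card_insert_if split: if_splits)
  have abcB: "{a,b,c} \<in> boundary_tris B" using assms(2) SB by simp
  have abdB: "{a,b,d} \<in> boundary_tris B" using assms(3) SB by simp
  obtain s1 where s1: "s1 \<in> B" "{a,b,c} \<subseteq> s1" using bd_ex[OF abcB] by blast
  obtain s2 where s2: "s2 \<in> B" "{a,b,d} \<subseteq> s2" using bd_ex[OF abdB] by blast
  have T1: "tet_of S {a,b,c} = s1" using tet_of_bd[OF st abcB s1] SB by simp
  have T2: "tet_of S {a,b,d} = s2" using tet_of_bd[OF st abdB s2] SB by simp
  have CT: "clique_tets S = B" using clique_bd[OF st] SB by simp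
  have ED: "edges2 S = {e. card e = 2 \<and> (\<exists>s\<in>B. e \<subseteq> s)}" using edges_bd[OF st] SB by simp
  obtain x where x: "x \<notin> {a,b,c}" "s1 = insert x {a,b,c}"
    using tet_split[OF stacked_card[OF st s1(1)] s1(2) assms(4)] by blast
  obtain y where y: "y \<notin> {a,b,d}" "s2 = insert y {a,b,d}"
    using tet_split[OF stacked_card[OF st s2(1)] s2(2) assms(5)] by blast
  have s1e: "s1 = {a,b,c,x}" using x by auto
  have s2e: "s2 = {a,b,d,y}" using y by auto
  have clq: "\<And>K. card K = 4 \<Longrightarrow> (\<forall>p\<in>K. \<forall>q\<in>K. p \<noteq> q \<longrightarrow> (\<exists>s\<in>B. {p,q} \<subseteq> s)) \<Longrightarrow> K \<in> B"
    using I5[OF st] by blast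
  show ?thesis
  proof (intro conjI impI)
    assume adj: "dual_adj (clique_tets S) (tet_of S {a, b, c}) (tet_of S {a, b, d})"
    then have ne: "s1 \<noteq> s2" and ci: "card (s1 \<inter> s2) = 3" unfolding dual_adj_def T1 T2 by auto
    have dns1: "d \<notin> s1"
    proof
      assume "d \<in> s1"
      then have "{a,b,d} \<subseteq> s1" using s1 by auto
      then show False using bd_unique[OF abdB s1(1) s2(1) _ s2(2)] ne by blast
    qed
    have xd: "x \<noteq> d" using dns1 s1e by auto
    have cns2: "c \<notin> s2"
    proof
      assume "c \<in> s2"
      then have "{a,b,c} \<subseteq> s2" using s2 by auto
      then show False using bd_unique[OF abcB s1(1) s2(1) s1(2)] ne by blast
    qed
    have xy: "x = y"
    proof (rule ccontr)
      assume nxy: "x \<noteq> y"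
      have "s1 \<inter> s2 \<subseteq> {a,b}"
      proof
        fix z assume z: "z \<in> s1 \<inter> s2"
        then have "z \<in> {a,b,c,x}" "z \<in> {a,b,d,y}" using s1e s2e by auto
        then show "z \<in> {a,b}" using cns2 dns1 nxy z by auto
      qed
      then have "card (s1 \<inter> s2) \<le> card {a,b}" by (intro card_mono) auto
      then show False using ci d1 by simp
    qed
    have ncd: "\<forall>s\<in>B. \<not> {c,d} \<subseteq> s"
    proof (intro ballI notI)
      fix s assume s: "s \<in> B" "{c,d} \<subseteq> s"
      let ?K = "{a,b,c,d}"
      have "card ?K = 4" using d1 d2 assms(6) by simp
      moreover have "\<forall>p\<in>?K. \<forall>q\<in>?K. p \<noteq> q \<longrightarrow> (\<exists>s\<in>B. {p,q} \<subseteq> s)"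
        using s s1 s2 by auto
      ultimately have "?K \<in> B" by (rule clq)
      moreover have "{a,b,c} \<subseteq> ?K" by auto
      ultimately have "?K = s1" using bd_unique[OF abcB _ s1(1)] s1(2) by blast
      then show False using dns1 by auto
    qed
    show "{c, d} \<notin> edges2 S" using ncd ED by auto
    have dd: "distinct [a,b,c,d,x]" using d1 d2 assms(6) x(1) xd by auto
    have s1B: "{a,b,c,x} \<in> B" and s2B: "{a,b,d,x} \<in> B" using s1 s2 s1e s2e xy by auto
    have "stacked_ball (insert {a,c,d,x} (insert {b,c,d,x} (B - {{a,b,c,x},{a,b,d,x}})))"
      by (rule lemM[OF st s1B s2B dd abcB abdB ncd])
    moreover have "boundary_tris (insert {a,c,d,x} (insert {b,c,d,x} (B - {{a,b,c,x},{a,b,d,x}}))) = edge_flip S a b c d"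
      using lemM_bd[OF st s1B s2B dd abcB abdB ncd] SB by (simp add: edge_flip_def)
    ultimately show "stacked_sphere (edge_flip S a b c d)" using sphere_iff by blast
  next
    assume h: "{c, d} \<notin> edges2 S \<and> stacked_sphere (edge_flip S a b c d)"
    let ?T = "edge_flip S a b c d"
    have cd2: "card {c,d} = 2" using assms(6) by simp
    have dns1: "d \<notin> s1"
    proof
      assume "d \<in> s1"
      then have "{c,d} \<subseteq> s1" using s1 by auto
      then show False using h ED cd2 s1(1) by blast
    qed
    have cns2: "c \<notin> s2"
    proof
      assume "c \<in> s2"
      then have "{c,d} \<subseteq> s2" using s2 by auto
      then show False using h ED cd2 s2(1) by blast
    qed
    have ne: "s1 \<noteq> s2" using dns1 s2 by auto
    have xd: "x \<noteq> d" using dns1 s1e by auto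
    have xy: "x = y"
    proof (rule ccontr)
      assume nxy: "x \<noteq> y"
      obtain BT where stT: "stacked_ball BT" and TB: "boundary_tris BT = ?T"
        using h sphere_iff by blast
      have EDT: "edges2 ?T = {e. card e = 2 \<and> (\<exists>s\<in>BT. e \<subseteq> s)}" using edges_bd[OF stT] TB by simp
      have xs: "x \<noteq> a" "x \<noteq> b" "x \<noteq> c" using x(1) by auto
      have xdS: "{x,d} \<notin> edges2 S"
      proof
        assume "{x,d} \<in> edges2 S"
        then obtain s where s: "s \<in> B" "{x,d} \<subseteq> s" using ED by auto
        let ?K = "{a,b,d,x}"
        have "card ?K = 4" using d1 d2 xs xd by simp
        moreover have "\<forall>p\<in>?K. \<forall>q\<in>?K. p \<noteq> q \<longrightarrow> (\<exists>s\<in>B. {p,q} \<subseteq> s)"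
        proof -
          have "{a,b,x} \<subseteq> s1" using s1e by auto
          moreover have "{a,b,d} \<subseteq> s2" using s2 by auto
          ultimately show ?thesis using s s1(1) s2(1) by auto
        qed
        ultimately have "?K \<in> B" by (rule clq)
        moreover have "{a,b,d} \<subseteq> ?K" by auto
        ultimately have "?K = s2" using bd_unique[OF abdB _ s2(1)] s2(2) by blast
        then have "x \<in> {a,b,d,y}" using s2e by auto
        then show False using xs xd nxy by auto
      qed
      have inT: "\<And>t. t \<in> S \<Longrightarrow> t \<noteq> {a,b,c} \<Longrightarrow> t \<noteq> {a,b,d} \<Longrightarrow> t \<in> ?T"
        by (simp add: edge_flip_def)
      have acdT: "{a,c,d} \<in> ?T" and bcdT: "{b,c,d} \<in> ?T" by (simp_all add: edge_flip_def)
      have Tcases: "\<And>t. t \<in> ?T \<Longrightarrow> (t \<in> S \<and> t \<noteq> {a,b,c} \<and> t \<noteq> {a,b,d}) \<or> t = {a,c,d} \<or> t = {b,c,d}"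
        by (auto simp: edge_flip_def)
      have eS: "\<And>p. p \<noteq> x \<Longrightarrow> p \<in> s1 \<Longrightarrow> {p,x} \<in> edges2 ?T"
      proof -
        fix p assume p: "p \<noteq> x" "p \<in> s1"
        have sub: "{p,x} \<subseteq> s1" using p(2) s1e by auto
        have "card {p,x} = 2" using p(1) by simp
        then have "{p,x} \<in> edges2 S" unfolding ED using sub s1(1) by blast
        then obtain t where t: "t \<in> S" "{p,x} \<subseteq> t" "card {p,x} = 2" by (auto simp: edges2_def)
        have "t \<noteq> {a,b,c}" "t \<noteq> {a,b,d}" using t(2) xs xd by auto
        then have "t \<in> ?T" using inT t(1) by blast
        then show "{p,x} \<in> edges2 ?T" using t by (auto simp: edges2_def)
      qed
      have e1: "{a,x} \<in> edges2 ?T" using eS[of a] xs s1e by auto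
      have e2: "{b,x} \<in> edges2 ?T" using eS[of b] xs s1e by auto
      have e3: "{b,d} \<in> edges2 ?T" using bcdT d2 by (auto simp: edges2_def)
      have e4: "{a,d} \<in> edges2 ?T" using acdT d2 by (auto simp: edges2_def)
      have n1: "{a,b} \<notin> edges2 ?T"
      proof
        assume "{a,b} \<in> edges2 ?T"
        then obtain t where t: "t \<in> ?T" "{a,b} \<subseteq> t" by (auto simp: edges2_def)
        have "{a,b,c} \<noteq> {a,b,d}" using d1 d2 assms(6) by (auto simp: insert_eq_iff)
        moreover have "card {a,b} = 2" using d1 by simp
        moreover have "t \<noteq> {a,c,d}" "t \<noteq> {b,c,d}" using t(2) d1 d2 by auto
        ultimately show False
          using Tcases[OF t(1)] I7[OF st _ abcB abdB, of "{a,b}" t] SB t(2) by auto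
      qed
      have n2: "{x,d} \<notin> edges2 ?T"
      proof
        assume "{x,d} \<in> edges2 ?T"
        then obtain t where t: "t \<in> ?T" "{x,d} \<subseteq> t" "card {x,d} = 2" by (auto simp: edges2_def)
        have "t \<noteq> {a,c,d}" "t \<noteq> {b,c,d}" using t(2) xs xd by auto
        then have "t \<in> S" using Tcases[OF t(1)] by blast
        then have "{x,d} \<in> edges2 S" using t by (auto simp: edges2_def)
        then show False using xdS by simp
      qed
      have "\<exists>s\<in>BT. {x,d} \<subseteq> s"
      proof (rule I6[OF stT, of a b x d])
        show "a \<noteq> b" "x \<noteq> d" using d1 xd by auto
        show "\<exists>s\<in>BT. {a,x} \<subseteq> s" using e1 EDT by auto
        show "\<exists>s\<in>BT. {x,b} \<subseteq> s" using e2 EDT by (auto simp: insert_commute)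
        show "\<exists>s\<in>BT. {b,d} \<subseteq> s" using e3 EDT by auto
        show "\<exists>s\<in>BT. {d,a} \<subseteq> s" using e4 EDT by (auto simp: insert_commute)
        show "\<not> (\<exists>s\<in>BT. {a,b} \<subseteq> s)" using n1 EDT d1 by auto
      qed
      then show False using n2 EDT xd by auto
    qed
    have "s1 \<inter> s2 = {a,b,x}" using s1e s2e xy dns1 cns2 by auto
    then have "card (s1 \<inter> s2) = 3" using d1 x(1) by auto
    then show "dual_adj (clique_tets S) (tet_of S {a, b, c}) (tet_of S {a, b, d})"
      unfolding dual_adj_def T1 T2 CT using s1(1) s2(1) ne by simp
  qed
qed


end
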